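(* Let $X$ be a cubic vertex-transitive graph for which $1$ is a simple eigenvalue, with $\pm1$ eigenvector $\mathbf{z}$ for $1$, $V^+=\{x\mid\mathbf{z}(x)=1\}$, $V^-=\{x\mid\mathbf{z}(x)=-1\}$, where $X[V^+]$ is a disjoint union of cycles $C_1,\dots,C_m$ and $X[V^-]$ a disjoint union of cycles $D_1,\dots,D_m$, all of length $k$. Let $\Gamma\le\mathrm{Aut}(X)$ act transitively on $V(X)$, and assume (A1): the stabilizer of $C_1$ in $\Gamma$ acts regularly on the vertex set of $C_1$. Write $C_1=v_1v_2\cdots v_k$ and let $D_1=w_1w_2\cdots w_k$ be the cycle of $X[V^-]$ with $v_1w_1\in E(X)$; let $\gamma_1\in\Gamma$ satisfy $\gamma_1(v_j)=v_{j+1}$ for all $j$ (indices mod $k$) and let $\delta_1\in\Gamma$ satisfy $\delta_1(v_j)=w_j$ for all $j$ (the labelling of $D_1$ being chosen so that such $\delta_1$ exists). Then $\Gamma$ acts regularly on $V(X)$, and hence $X$ is a Cayley graph of the group generated by $\gamma_1$ and the involution $\delta_1$.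
   Context: A group acts regularly on a set if it acts transitively and only the identity fixes a point. $X[W]$ denotes the induced subgraph on $W$. Eigenvalues are those of the adjacency matrix; simple means the eigenspace is $1$-dimensional. *)

theory Defs
  imports "HOL-Algebra.Algebra"
begin

definition simple_graph :: "'a set \<Rightarrow> ('a \<Rightarrow> 'a \<Rightarrow> bool) \<Rightarrow> bool" where
  "simple_graph V E \<longleftrightarrow> finite V \<and> (\<forall>x y. E x y \<longrightarrow> x \<in> V \<and> y \<in> V)
     \<and> (\<forall>x y. E x y \<longrightarrow> E y x) \<and> (\<forall>x. \<not> E x x)"

definition nbrs :: "'a set \<Rightarrow> ('a \<Rightarrow> 'a \<Rightarrow> bool) \<Rightarrow> 'a \<Rightarrow> 'a set" where
  "nbrs V E x = {y \<in> V. E x y}"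

definition cubic :: "'a set \<Rightarrow> ('a \<Rightarrow> 'a \<Rightarrow> bool) \<Rightarrow> bool" where
  "cubic V E \<longleftrightarrow> (\<forall>x\<in>V. card (nbrs V E x) = 3)"

definition graph_aut :: "'a set \<Rightarrow> ('a \<Rightarrow> 'a \<Rightarrow> bool) \<Rightarrow> ('a \<Rightarrow> 'a) \<Rightarrow> bool" where
  "graph_aut V E g \<longleftrightarrow> g \<in> Bij V \<and> (\<forall>x\<in>V. \<forall>y\<in>V. E x y \<longleftrightarrow> E (g x) (g y))"

definition vertex_transitive :: "'a set \<Rightarrow> ('a \<Rightarrow> 'a \<Rightarrow> bool) \<Rightarrow> bool" where
  "vertex_transitive V E \<longleftrightarrow> (\<forall>x\<in>V. \<forall>y\<in>V. \<exists>g. graph_aut V E g \<and> g x = y)"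

definition eigenspace :: "'a set \<Rightarrow> ('a \<Rightarrow> 'a \<Rightarrow> bool) \<Rightarrow> real \<Rightarrow> ('a \<Rightarrow> real) set" where
  "eigenspace V E lam = {f. (\<forall>x. x \<notin> V \<longrightarrow> f x = 0) \<and>
       (\<forall>x\<in>V. (\<Sum>y\<in>nbrs V E x. f y) = lam * f x)}"

definition simple_eigenvalue :: "'a set \<Rightarrow> ('a \<Rightarrow> 'a \<Rightarrow> bool) \<Rightarrow> real \<Rightarrow> bool" where
  "simple_eigenvalue V E lam \<longleftrightarrow>
     (\<exists>z. z \<noteq> (\<lambda>_. 0) \<and> eigenspace V E lam = {(\<lambda>x. c * z x) | c. True})"

definition is_cycle :: "'a set \<Rightarrow> ('a \<Rightarrow> 'a \<Rightarrow> bool) \<Rightarrow> nat \<Rightarrow> (nat \<Rightarrow> 'a) \<Rightarrow> bool" where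
  "is_cycle V E k c \<longleftrightarrow> 3 \<le> k \<and> inj_on c {..<k} \<and> c ` {..<k} \<subseteq> V \<and>
     (\<forall>i<k. E (c i) (c (Suc i mod k)))"

definition induced_cycle_union ::
  "'a set \<Rightarrow> ('a \<Rightarrow> 'a \<Rightarrow> bool) \<Rightarrow> 'a set \<Rightarrow> nat \<Rightarrow> nat \<Rightarrow> (nat \<Rightarrow> nat \<Rightarrow> 'a) \<Rightarrow> bool" where
  "induced_cycle_union V E W k m Cs \<longleftrightarrow>
     (\<forall>i<m. is_cycle V E k (Cs i)) \<and>
     (\<forall>i<m. \<forall>j<m. i \<noteq> j \<longrightarrow> Cs i ` {..<k} \<inter> Cs j ` {..<k} = {}) \<and>
     (\<Union>i<m. Cs i ` {..<k}) = W \<and>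
     (\<forall>x\<in>W. \<forall>y\<in>W. E x y \<longleftrightarrow>
        (\<exists>i<m. \<exists>j<k. {x, y} = {Cs i j, Cs i (Suc j mod k)}))"

definition acts_transitively_on :: "('a \<Rightarrow> 'a) set \<Rightarrow> 'a set \<Rightarrow> bool" where
  "acts_transitively_on H B \<longleftrightarrow> (\<forall>x\<in>B. \<forall>y\<in>B. \<exists>g\<in>H. g x = y)"

definition acts_regularly_on :: "'a set \<Rightarrow> ('a \<Rightarrow> 'a) set \<Rightarrow> 'a set \<Rightarrow> bool" where
  "acts_regularly_on V H B \<longleftrightarrow> acts_transitively_on H B \<and>
     (\<forall>g\<in>H. (\<exists>x\<in>B. g x = x) \<longrightarrow> g = \<one>\<^bsub>BijGroup V\<^esub>)"

definition set_stabilizer :: "('a \<Rightarrow> 'a) set \<Rightarrow> 'a set \<Rightarrow> ('a \<Rightarrow> 'a) set" where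
  "set_stabilizer H B = {g \<in> H. g ` B = B}"

definition is_cayley_graph_of ::
  "'a set \<Rightarrow> ('a \<Rightarrow> 'a \<Rightarrow> bool) \<Rightarrow> ('b, 'c) monoid_scheme \<Rightarrow> bool" where
  "is_cayley_graph_of V E G \<longleftrightarrow> group G \<and>
     (\<exists>S \<phi>. S \<subseteq> carrier G \<and> \<one>\<^bsub>G\<^esub> \<notin> S \<and> (\<forall>s\<in>S. inv\<^bsub>G\<^esub> s \<in> S) \<and>
        bij_betw \<phi> (carrier G) V \<and>
        (\<forall>g\<in>carrier G. \<forall>h\<in>carrier G. E (\<phi> g) (\<phi> h) \<longleftrightarrow> inv\<^bsub>G\<^esub> g \<otimes>\<^bsub>G\<^esub> h \<in> S))"

end

theory Submission
  imports Defs
begin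


lemma bij_mult_eval: "a \<in> Bij V \<Longrightarrow> b \<in> Bij V \<Longrightarrow> x \<in> V \<Longrightarrow> (a \<otimes>\<^bsub>BijGroup V\<^esub> b) x = a (b x)"
  by (simp add: BijGroup_def compose_def)

lemma bij_one_eval: "x \<in> V \<Longrightarrow> \<one>\<^bsub>BijGroup V\<^esub> x = x"
  by (simp add: BijGroup_def)

lemma bij_in_V: "a \<in> Bij V \<Longrightarrow> x \<in> V \<Longrightarrow> a x \<in> V"
  using Bij_imp_funcset by blast

lemma aut_eig:
  assumes g: "graph_aut V E g" and G: "simple_graph V E" and f: "f \<in> eigenspace V E lam"
  shows "(\<lambda>x. if x \<in> V then f (g x) else 0) \<in> eigenspace V E lam"
proof -
  have gb: "bij_betw g V V" using g by (simp add: graph_aut_def Bij_def)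
  have ge: "\<forall>x\<in>V. \<forall>y\<in>V. E x y \<longleftrightarrow> E (g x) (g y)" using g by (simp add: graph_aut_def)
  have EV: "\<And>x y. E x y \<Longrightarrow> x \<in> V \<and> y \<in> V" using G by (simp add: simple_graph_def)
  { fix x assume x: "x \<in> V"
    have im: "nbrs V E (g x) = g ` nbrs V E x"
    proof
      show "g ` nbrs V E x \<subseteq> nbrs V E (g x)" using ge x gb by (auto simp: nbrs_def bij_betw_def)
    next
      show "nbrs V E (g x) \<subseteq> g ` nbrs V E x"
      proof
        fix y assume y: "y \<in> nbrs V E (g x)"
        then have "y \<in> V" by (simp add: nbrs_def)
        then obtain y' where "y' \<in> V" "y = g y'" using gb by (auto simp: bij_betw_def)
        then show "y \<in> g ` nbrs V E x" using y ge x by (auto simp: nbrs_def)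
      qed
    qed
    have inj: "inj_on g (nbrs V E x)" using gb by (auto simp: bij_betw_def nbrs_def inj_on_def)
    have "(\<Sum>y\<in>nbrs V E x. (if y \<in> V then f (g y) else 0)) = (\<Sum>y\<in>nbrs V E x. f (g y))"
      by (rule sum.cong) (auto simp: nbrs_def)
    also have "\<dots> = (\<Sum>y\<in>nbrs V E (g x). f y)" using im sum.reindex[OF inj, of f] by simp
    also have "\<dots> = lam * f (g x)" using f x gb by (auto simp: eigenspace_def bij_betw_def)
    finally have "(\<Sum>y\<in>nbrs V E x. (if y \<in> V then f (g y) else 0)) = lam * (if x \<in> V then f (g x) else 0)"
      using x by simp }
  then show ?thesis by (simp add: eigenspace_def)
qed



lemma simple_ratio:
  assumes s: "simple_eigenvalue V E 1" and z: "z \<in> eigenspace V E 1" and zv: "z v = 1"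
    and f: "f \<in> eigenspace V E 1"
  shows "f x = f v * z x"
proof -
  obtain z0 where e: "eigenspace V E 1 = {(\<lambda>x. c * z0 x) | c. True}" using s by (auto simp: simple_eigenvalue_def)
  obtain a where a: "z = (\<lambda>x. a * z0 x)" using z e by auto
  obtain b where b: "f = (\<lambda>x. b * z0 x)" using f e by auto
  have "a * z0 v = 1" using a zv by simp
  then show ?thesis using a b by (simp add: algebra_simps)
qed



lemma unique_plus_nbr:
  assumes c: "cubic V E" and G: "simple_graph V E" and z: "z \<in> eigenspace V E 1"
    and pm: "\<forall>x\<in>V. z x = 1 \<or> z x = -1" and x: "x \<in> V" and zx: "z x = -1"
  shows "card {y\<in>nbrs V E x. z y = 1} = 1"
proof -
  define N where "N = nbrs V E x"
  define P where "P = {y\<in>N. z y = 1}"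
  define M where "M = {y\<in>N. z y \<noteq> 1}"
  have fin: "finite N" using G by (simp add: simple_graph_def nbrs_def N_def)
  have finP: "finite P" and finM: "finite M" using fin by (auto simp: P_def M_def)
  have c3: "card N = 3" using c x by (simp add: cubic_def N_def)
  have NPM: "N = P \<union> M" and disj: "P \<inter> M = {}" by (auto simp: P_def M_def)
  have "sum z N = sum z P + sum z M" using NPM disj finP finM sum.union_disjoint by metis
  moreover have "sum z P = real (card P)" by (simp add: P_def)
  moreover have "sum z M = sum (\<lambda>_. -1) M"
  proof (rule sum.cong)
    fix y assume "y \<in> M"
    then show "z y = -1" using pm by (auto simp: M_def N_def nbrs_def)
  qed simp
  moreover have "sum z N = -1" using z x zx by (simp add: eigenspace_def N_def)
  moreover have "card N = card P + card M" using NPM disj finP finM card_Un_disjoint by metis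
  ultimately show ?thesis using c3 by (simp add: P_def N_def)
qed



lemma bij_carr: "carrier (BijGroup V) = Bij V" by (simp add: BijGroup_def)

lemma bij_inv_l: "g \<in> Bij V \<Longrightarrow> x \<in> V \<Longrightarrow> (inv\<^bsub>BijGroup V\<^esub> g) (g x) = x"
proof -
  assume g: "g \<in> Bij V" and x: "x \<in> V"
  interpret G: group "BijGroup V" by (rule group_BijGroup)
  have i: "inv\<^bsub>BijGroup V\<^esub> g \<in> Bij V" using G.inv_closed[of g] g by (simp add: bij_carr)
  have "inv\<^bsub>BijGroup V\<^esub> g \<otimes>\<^bsub>BijGroup V\<^esub> g = \<one>\<^bsub>BijGroup V\<^esub>" using G.l_inv[of g] g by (simp add: bij_carr)
  then have "(inv\<^bsub>BijGroup V\<^esub> g \<otimes>\<^bsub>BijGroup V\<^esub> g) x = x" using bij_one_eval x by simp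
  then show ?thesis using bij_mult_eval[OF i g x] by simp
qed

lemma bij_inv_r: "g \<in> Bij V \<Longrightarrow> x \<in> V \<Longrightarrow> g ((inv\<^bsub>BijGroup V\<^esub> g) x) = x"
proof -
  assume g: "g \<in> Bij V" and x: "x \<in> V"
  interpret G: group "BijGroup V" by (rule group_BijGroup)
  have i: "inv\<^bsub>BijGroup V\<^esub> g \<in> Bij V" using G.inv_closed[of g] g by (simp add: bij_carr)
  have "g \<otimes>\<^bsub>BijGroup V\<^esub> inv\<^bsub>BijGroup V\<^esub> g = \<one>\<^bsub>BijGroup V\<^esub>" using G.r_inv[of g] g by (simp add: bij_carr)
  then have "(g \<otimes>\<^bsub>BijGroup V\<^esub> inv\<^bsub>BijGroup V\<^esub> g) x = x" using bij_one_eval x by simp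
  then show ?thesis using bij_mult_eval[OF g i x] by simp
qed




theorem theorem5p1:
  fixes V :: "'a set" and E :: "'a \<Rightarrow> 'a \<Rightarrow> bool"
    and z :: "'a \<Rightarrow> real" and k m :: nat
    and Cs Ds :: "nat \<Rightarrow> nat \<Rightarrow> 'a"
    and \<Gamma> :: "('a \<Rightarrow> 'a) set"
    and w :: "nat \<Rightarrow> 'a" and \<gamma>1 \<delta>1 :: "'a \<Rightarrow> 'a"
  assumes graph: "simple_graph V E"
    and cub: "cubic V E"
    and vt: "vertex_transitive V E"
    and simple: "simple_eigenvalue V E 1"
    and z_eig: "z \<in> eigenspace V E 1"
    and z_pm: "\<forall>x\<in>V. z x = 1 \<or> z x = -1"
    and m_pos: "0 < m"
    and Cs: "induced_cycle_union V E {x \<in> V. z x = 1} k m Cs"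
    and Ds: "induced_cycle_union V E {x \<in> V. z x = -1} k m Ds"
    and \<Gamma>_sub: "subgroup \<Gamma> (BijGroup V)"
    and \<Gamma>_aut: "\<forall>g\<in>\<Gamma>. graph_aut V E g"
    and \<Gamma>_trans: "acts_transitively_on \<Gamma> V"
    and A1: "acts_regularly_on V (set_stabilizer \<Gamma> (Cs 0 ` {..<k})) (Cs 0 ` {..<k})"
    and w_cyc: "is_cycle V E k w"
    and w_D: "\<exists>i<m. w ` {..<k} = Ds i ` {..<k}"
    and w_adj: "E (Cs 0 0) (w 0)"
    and \<gamma>1: "\<gamma>1 \<in> \<Gamma>" "\<forall>j<k. \<gamma>1 (Cs 0 j) = Cs 0 (Suc j mod k)"
    and \<delta>1: "\<delta>1 \<in> \<Gamma>" "\<forall>j<k. \<delta>1 (Cs 0 j) = w j"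
  shows "acts_regularly_on V \<Gamma> V
    \<and> \<delta>1 \<otimes>\<^bsub>BijGroup V\<^esub> \<delta>1 = \<one>\<^bsub>BijGroup V\<^esub> \<and> \<delta>1 \<noteq> \<one>\<^bsub>BijGroup V\<^esub>
    \<and> is_cayley_graph_of V E
        ((BijGroup V)\<lparr>carrier := generate (BijGroup V) {\<gamma>1, \<delta>1}\<rparr>)"
proof -
  let ?G = "BijGroup V"
  interpret G: group ?G by (rule group_BijGroup)
  have carr: "carrier ?G = Bij V" by (rule bij_carr)
  have GsubB: "\<Gamma> \<subseteq> Bij V" using subgroup.subset[OF \<Gamma>_sub] carr by simp
  have \<Gamma>B: "\<And>g. g \<in> \<Gamma> \<Longrightarrow> g \<in> Bij V" using GsubB by blast
  have \<Gamma>inv: "\<And>g. g \<in> \<Gamma> \<Longrightarrow> inv\<^bsub>?G\<^esub> g \<in> \<Gamma>" using subgroup.m_inv_closed[OF \<Gamma>_sub] by blast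
  have \<Gamma>mult: "\<And>g h. g \<in> \<Gamma> \<Longrightarrow> h \<in> \<Gamma> \<Longrightarrow> g \<otimes>\<^bsub>?G\<^esub> h \<in> \<Gamma>" using subgroup.m_closed[OF \<Gamma>_sub] by blast
  have \<Gamma>e: "\<And>g x y. g \<in> \<Gamma> \<Longrightarrow> x \<in> V \<Longrightarrow> y \<in> V \<Longrightarrow> E x y = E (g x) (g y)"
    using \<Gamma>_aut by (simp add: graph_aut_def)
  have \<Gamma>V: "\<And>g x. g \<in> \<Gamma> \<Longrightarrow> x \<in> V \<Longrightarrow> g x \<in> V" by (metis \<Gamma>B bij_in_V)
  have EV: "\<And>x y. E x y \<Longrightarrow> x \<in> V \<and> y \<in> V" using graph by (simp add: simple_graph_def)
  have Esym: "\<And>x y. E x y \<Longrightarrow> E y x" using graph by (simp add: simple_graph_def)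
  have Eirr: "\<And>x. \<not> E x x" using graph by (simp add: simple_graph_def)
  have finV: "finite V" using graph by (simp add: simple_graph_def)
  have C0: "is_cycle V E k (Cs 0)" using Cs m_pos by (simp add: induced_cycle_union_def)
  have k3: "3 \<le> k" using C0 by (simp add: is_cycle_def)
  have C0V: "\<And>j. j < k \<Longrightarrow> Cs 0 j \<in> V" using C0 by (auto simp: is_cycle_def)
  have CW: "(\<Union>i<m. Cs i ` {..<k}) = {x \<in> V. z x = 1}" using Cs by (simp add: induced_cycle_union_def)
  have C0z: "\<And>j. j < k \<Longrightarrow> z (Cs 0 j) = 1"
  proof -
    fix j assume "j < k"
    then have "Cs 0 j \<in> (\<Union>i<m. Cs i ` {..<k})" using m_pos by blast
    then show "z (Cs 0 j) = 1" using CW by blast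
  qed
  define v1 where "v1 = Cs 0 0"
  have v1V: "v1 \<in> V" and zv1: "z v1 = 1" using C0V C0z k3 v1_def by auto
  have w0: "w 0 \<in> V \<and> z (w 0) = -1"
  proof -
    obtain i where i: "i < m" "w ` {..<k} = Ds i ` {..<k}" using w_D by blast
    have "w 0 \<in> Ds i ` {..<k}" using i k3 by (metis image_eqI lessThan_iff not_numeral_le_zero not_gr_zero)
    then have "w 0 \<in> (\<Union>i<m. Ds i ` {..<k})" using i by blast
    moreover have "(\<Union>i<m. Ds i ` {..<k}) = {x \<in> V. z x = -1}" using Ds by (simp add: induced_cycle_union_def)
    ultimately show ?thesis by blast
  qed
  have zratio: "\<And>g x. g \<in> \<Gamma> \<Longrightarrow> x \<in> V \<Longrightarrow> z (g x) = z (g v1) * z x"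
  proof -
    fix g x assume g: "g \<in> \<Gamma>" and x: "x \<in> V"
    have "(\<lambda>x. if x \<in> V then z (g x) else 0) \<in> eigenspace V E 1"
      using aut_eig[OF _ graph z_eig] \<Gamma>_aut g by blast
    from simple_ratio[OF simple z_eig zv1 this, of x] show "z (g x) = z (g v1) * z x"
      using x v1V by simp
  qed
  have stab: "\<And>g. g \<in> \<Gamma> \<Longrightarrow> g v1 = v1 \<Longrightarrow> g = \<one>\<^bsub>?G\<^esub>"
  proof -
    fix g assume g: "g \<in> \<Gamma>" "g v1 = v1"
    have zg: "\<And>x. x \<in> V \<Longrightarrow> z (g x) = z x" using zratio g zv1 by simp
    have into: "g (Cs 0 j) \<in> Cs 0 ` {..<k}" if "j < k" for j
      using that
    proof (induction j)
      case 0 show ?case using g k3 v1_def by auto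
    next
      case (Suc j)
      then obtain j' where j': "j' < k" "g (Cs 0 j) = Cs 0 j'" by auto
      have e: "E (Cs 0 j) (Cs 0 (Suc j))"
      proof -
        have "j < k" using Suc.prems by simp
        then have "E (Cs 0 j) (Cs 0 (Suc j mod k))" using C0 unfolding is_cycle_def by blast
        then show ?thesis using Suc.prems by simp
      qed
      have exy: "E (g (Cs 0 j)) (g (Cs 0 (Suc j)))" using \<Gamma>e g e C0V Suc.prems by simp
      have Wx: "g (Cs 0 j) \<in> {x\<in>V. z x = 1}" using zg C0z \<Gamma>V g C0V Suc.prems by simp
      have Wy: "g (Cs 0 (Suc j)) \<in> {x\<in>V. z x = 1}" using zg C0z \<Gamma>V g C0V Suc.prems by simp
      obtain i j2 where ij: "i<m" "j2<k" "{g (Cs 0 j), g (Cs 0 (Suc j))} = {Cs i j2, Cs i (Suc j2 mod k)}"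
        using Cs[unfolded induced_cycle_union_def] exy Wx Wy by blast
      have sm: "Suc j2 mod k < k" using k3 by simp
      have xi: "g (Cs 0 j) \<in> Cs i ` {..<k}" "g (Cs 0 (Suc j)) \<in> Cs i ` {..<k}"
        using ij(2,3) sm by (auto simp: doubleton_eq_iff)
      have "i = 0"
      proof (rule ccontr)
        assume "i \<noteq> 0"
        then have "Cs i ` {..<k} \<inter> Cs 0 ` {..<k} = {}"
          using Cs ij(1) m_pos by (simp add: induced_cycle_union_def)
        then show False using xi(1) j' by auto
      qed
      then show ?case using xi(2) by simp
    qed
    have gb: "bij_betw g V V" using \<Gamma>B g by (simp add: Bij_def)
    have "g ` (Cs 0 ` {..<k}) = Cs 0 ` {..<k}"
    proof (rule endo_inj_surj)
      show "finite (Cs 0 ` {..<k})" by simp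
      show "g ` Cs 0 ` {..<k} \<subseteq> Cs 0 ` {..<k}" using into by auto
      show "inj_on g (Cs 0 ` {..<k})" using gb C0V unfolding bij_betw_def
        by (meson image_subsetI inj_on_subset lessThan_iff)
    qed
    then have "g \<in> set_stabilizer \<Gamma> (Cs 0 ` {..<k})" using g by (simp add: set_stabilizer_def)
    moreover have "v1 \<in> Cs 0 ` {..<k}" using k3 v1_def by auto
    ultimately show "g = \<one>\<^bsub>?G\<^esub>" using A1 g unfolding acts_regularly_on_def by blast
  qed
  have reg: "acts_regularly_on V \<Gamma> V"
    unfolding acts_regularly_on_def
  proof (intro conjI ballI impI)
    show "acts_transitively_on \<Gamma> V" by (rule \<Gamma>_trans)
    fix g assume g: "g \<in> \<Gamma>" and "\<exists>x\<in>V. g x = x"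
    then obtain x where x: "x \<in> V" "g x = x" by blast
    obtain t where t: "t \<in> \<Gamma>" "t v1 = x" using \<Gamma>_trans v1V x unfolding acts_transitively_on_def by blast
    define h where "h = inv\<^bsub>?G\<^esub> t \<otimes>\<^bsub>?G\<^esub> (g \<otimes>\<^bsub>?G\<^esub> t)"
    have hG: "h \<in> \<Gamma>" using h_def \<Gamma>mult \<Gamma>inv g t by simp
    have tB: "t \<in> Bij V" and gB: "g \<in> Bij V" using \<Gamma>B g t by auto
    have itB: "inv\<^bsub>?G\<^esub> t \<in> Bij V" using \<Gamma>B \<Gamma>inv t by blast
    have gtB: "g \<otimes>\<^bsub>?G\<^esub> t \<in> Bij V" using \<Gamma>B \<Gamma>mult g t by blast
    have gt: "(g \<otimes>\<^bsub>?G\<^esub> t) v1 = g (t v1)" by (rule bij_mult_eval[OF gB tB v1V])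
    have hv: "h v1 = (inv\<^bsub>?G\<^esub> t) (g (t v1))"
      unfolding h_def using bij_mult_eval[OF itB gtB v1V] gt by simp
    have "(inv\<^bsub>?G\<^esub> t) (g (t v1)) = v1" using x t bij_inv_l[OF tB v1V] by simp
    then have h1: "h = \<one>\<^bsub>?G\<^esub>" using stab hG hv by simp
    have tC: "t \<in> carrier ?G" and gC: "g \<in> carrier ?G" using tB gB carr by auto
    have "\<one>\<^bsub>?G\<^esub> = inv\<^bsub>?G\<^esub> t \<otimes>\<^bsub>?G\<^esub> (g \<otimes>\<^bsub>?G\<^esub> t)"
      using h1 h_def by simp
    then have "g \<otimes>\<^bsub>?G\<^esub> t = t \<otimes>\<^bsub>?G\<^esub> \<one>\<^bsub>?G\<^esub>"
      using G.inv_solve_left[of "\<one>\<^bsub>?G\<^esub>" t "g \<otimes>\<^bsub>?G\<^esub> t"] tC gC by simp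
    then show "g = \<one>\<^bsub>?G\<^esub>" using tC gC by simp
  qed
  have d1v1: "\<delta>1 v1 = w 0" using \<delta>1 k3 v1_def by auto
  have zd: "\<And>x. x \<in> V \<Longrightarrow> z (\<delta>1 x) = - z x" using zratio[OF \<delta>1(1)] d1v1 w0 by simp
  have Ev1w0: "E v1 (w 0)" using w_adj v1_def by simp
  have dw: "\<delta>1 (w 0) = v1"
  proof -
    have c1: "card {y\<in>nbrs V E (w 0). z y = 1} = 1"
      using unique_plus_nbr[OF cub graph z_eig z_pm] w0 by blast
    have a: "v1 \<in> {y\<in>nbrs V E (w 0). z y = 1}" using Ev1w0 Esym v1V zv1 by (simp add: nbrs_def)
    have "E (\<delta>1 v1) (\<delta>1 (w 0))" using \<Gamma>e[OF \<delta>1(1) v1V] w0 Ev1w0 by blast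
    then have b: "\<delta>1 (w 0) \<in> {y\<in>nbrs V E (w 0). z y = 1}"
      using d1v1 \<Gamma>V[OF \<delta>1(1)] w0 zd by (simp add: nbrs_def)
    from c1 obtain u where u: "{y\<in>nbrs V E (w 0). z y = 1} = {u}" by (rule card_1_singletonE)
    have "v1 = u" using a unfolding u by simp
    moreover have "\<delta>1 (w 0) = u" using b unfolding u by simp
    ultimately show ?thesis by simp
  qed
  have d1B: "\<delta>1 \<in> Bij V" using \<Gamma>B \<delta>1(1) by blast
  have dd: "\<delta>1 \<otimes>\<^bsub>?G\<^esub> \<delta>1 = \<one>\<^bsub>?G\<^esub>"
  proof (rule stab)
    show "\<delta>1 \<otimes>\<^bsub>?G\<^esub> \<delta>1 \<in> \<Gamma>" using \<Gamma>mult \<delta>1(1) by blast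
    show "(\<delta>1 \<otimes>\<^bsub>?G\<^esub> \<delta>1) v1 = v1" using bij_mult_eval[OF d1B d1B v1V] d1v1 dw by simp
  qed
  have dn: "\<delta>1 \<noteq> \<one>\<^bsub>?G\<^esub>"
  proof
    assume "\<delta>1 = \<one>\<^bsub>?G\<^esub>"
    then have "\<delta>1 v1 = v1" using bij_one_eval v1V by metis
    then show False using d1v1 Ev1w0 Eirr by metis
  qed
  define H where "H = generate ?G {\<gamma>1, \<delta>1}"
  have gens: "{\<gamma>1, \<delta>1} \<subseteq> carrier ?G" using \<Gamma>B \<gamma>1(1) \<delta>1(1) carr by auto
  have Hsub: "subgroup H ?G" unfolding H_def by (rule G.generate_is_subgroup[OF gens])
  have HG: "H \<subseteq> \<Gamma>" unfolding H_def
    by (rule G.generate_subgroup_incl[OF _ \<Gamma>_sub]) (use \<gamma>1(1) \<delta>1(1) in auto)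
  have g1H: "\<gamma>1 \<in> H" unfolding H_def by (rule generate.incl) simp
  have d1H: "\<delta>1 \<in> H" unfolding H_def by (rule generate.incl) simp
  have Hinv: "\<And>h. h \<in> H \<Longrightarrow> inv\<^bsub>?G\<^esub> h \<in> H" using subgroup.m_inv_closed[OF Hsub] by blast
  have Hmult: "\<And>g h. g \<in> H \<Longrightarrow> h \<in> H \<Longrightarrow> g \<otimes>\<^bsub>?G\<^esub> h \<in> H" using subgroup.m_closed[OF Hsub] by blast
  have Hone: "\<one>\<^bsub>?G\<^esub> \<in> H" using subgroup.one_closed[OF Hsub] .
  have HB: "\<And>h. h \<in> H \<Longrightarrow> h \<in> Bij V" using HG \<Gamma>B by blast
  have k1: "1 < k" "k - 1 < k" using k3 by auto
  have C01: "Cs 0 1 \<noteq> Cs 0 (k-1)"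
  proof
    assume eq: "Cs 0 1 = Cs 0 (k-1)"
    have "inj_on (Cs 0) {..<k}" using C0 by (simp add: is_cycle_def)
    then have "(1::nat) = k - 1" using inj_onD[of "Cs 0" "{..<k}" 1 "k-1"] eq k1 by simp
    then show False using k3 by simp
  qed
  have Cw: "\<And>j. j<k \<Longrightarrow> Cs 0 j \<noteq> w 0" using C0z w0 by force
  have e1: "E v1 (Cs 0 1)"
  proof -
    have "(0::nat) < k" using k1 by simp
    then have "E (Cs 0 0) (Cs 0 (Suc 0 mod k))" using C0 unfolding is_cycle_def by blast
    moreover have "Suc 0 mod k = 1" using k1 by simp
    ultimately show ?thesis using v1_def by simp
  qed
  have e2: "E v1 (Cs 0 (k-1))"
  proof -
    have "E (Cs 0 (k-1)) (Cs 0 (Suc (k-1) mod k))" using C0 k1 unfolding is_cycle_def by blast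
    moreover have "Suc (k-1) mod k = 0" using k1 by simp
    ultimately show ?thesis using v1_def Esym by simp
  qed
  have nb: "nbrs V E v1 = {Cs 0 1, Cs 0 (k-1), w 0}"
  proof -
    have sub: "{Cs 0 1, Cs 0 (k-1), w 0} \<subseteq> nbrs V E v1" using e1 e2 Ev1w0 EV by (auto simp: nbrs_def)
    have n1: "Cs 0 1 \<noteq> w 0" using Cw k1 by blast
    have n2: "Cs 0 (k-1) \<noteq> w 0" using Cw k1 by blast
    have c: "card {Cs 0 1, Cs 0 (k-1), w 0} = 3" unfolding card_3_iff using C01 n1 n2 by blast
    have fin: "finite (nbrs V E v1)" using finV by (simp add: nbrs_def)
    have cn: "card (nbrs V E v1) = 3" using cub v1V by (simp add: cubic_def)
    have "{Cs 0 1, Cs 0 (k-1), w 0} = nbrs V E v1" by (rule card_subset_eq[OF fin sub]) (rule trans[OF c cn[symmetric]])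
    then show ?thesis by simp
  qed
  have g1v1: "\<gamma>1 v1 = Cs 0 1"
  proof -
    have "(0::nat) < k" using k1 by simp
    then have "\<gamma>1 (Cs 0 0) = Cs 0 (Suc 0 mod k)" using \<gamma>1(2) by blast
    moreover have "Suc 0 mod k = 1" using k1 by simp
    ultimately show ?thesis using v1_def by simp
  qed
  have g1k: "\<gamma>1 (Cs 0 (k-1)) = v1"
  proof -
    have "\<gamma>1 (Cs 0 (k-1)) = Cs 0 (Suc (k-1) mod k)" using \<gamma>1(2) k1 by blast
    moreover have "Suc (k-1) mod k = 0" using k1 by simp
    ultimately show ?thesis using v1_def by simp
  qed
  have g1B: "\<gamma>1 \<in> Bij V" using \<Gamma>B \<gamma>1(1) by blast
  have ig1: "(inv\<^bsub>?G\<^esub> \<gamma>1) v1 = Cs 0 (k-1)" using bij_inv_l[OF g1B C0V[OF k1(2)]] g1k by simp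
  define Orb where "Orb = (\<lambda>h. h v1) ` H"
  have OV: "Orb \<subseteq> V"
  proof
    fix y assume "y \<in> Orb"
    then obtain h where h: "h \<in> H" "y = h v1" unfolding Orb_def by blast
    then show "y \<in> V" using bij_in_V[OF HB[OF h(1)] v1V] by simp
  qed
  have v1O: "v1 \<in> Orb"
  proof -
    have "\<one>\<^bsub>?G\<^esub> v1 = v1" using bij_one_eval v1V by metis
    then show ?thesis using Hone unfolding Orb_def by (metis image_eqI)
  qed
  have closed: "\<And>h y. h \<in> H \<Longrightarrow> y \<in> V \<Longrightarrow> E y (h v1) \<Longrightarrow> y \<in> Orb"
  proof -
    fix h y assume h: "h \<in> H" and y: "y \<in> V" and e: "E y (h v1)"
    have hiH: "inv\<^bsub>?G\<^esub> h \<in> H" using Hinv h by blast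
    have hB: "h \<in> Bij V" and hiB: "inv\<^bsub>?G\<^esub> h \<in> Bij V" using HB h hiH by auto
    have hv1V: "h v1 \<in> V" by (rule bij_in_V[OF hB v1V])
    have hiG: "inv\<^bsub>?G\<^esub> h \<in> \<Gamma>" using HG hiH by blast
    have "E y (h v1) = E ((inv\<^bsub>?G\<^esub> h) y) ((inv\<^bsub>?G\<^esub> h) (h v1))"
      by (rule \<Gamma>e[OF hiG y hv1V])
    then have "E ((inv\<^bsub>?G\<^esub> h) y) ((inv\<^bsub>?G\<^esub> h) (h v1))" using e by simp
    then have "E ((inv\<^bsub>?G\<^esub> h) y) v1" using bij_inv_l[OF hB v1V] by simp
    then have "E v1 ((inv\<^bsub>?G\<^esub> h) y)" by (rule Esym)
    moreover have "(inv\<^bsub>?G\<^esub> h) y \<in> V" by (rule bij_in_V[OF hiB y])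
    ultimately have "(inv\<^bsub>?G\<^esub> h) y \<in> nbrs V E v1" by (simp add: nbrs_def)
    then have "(inv\<^bsub>?G\<^esub> h) y \<in> {Cs 0 1, Cs 0 (k-1), w 0}" using nb by simp
    then have "(inv\<^bsub>?G\<^esub> h) y = Cs 0 1 \<or> (inv\<^bsub>?G\<^esub> h) y = Cs 0 (k-1) \<or> (inv\<^bsub>?G\<^esub> h) y = w 0"
      by blast
    then have cases: "(inv\<^bsub>?G\<^esub> h) y = \<gamma>1 v1 \<or> (inv\<^bsub>?G\<^esub> h) y = (inv\<^bsub>?G\<^esub> \<gamma>1) v1
        \<or> (inv\<^bsub>?G\<^esub> h) y = \<delta>1 v1"
      unfolding g1v1 ig1 d1v1 .
    have yeq: "y = h ((inv\<^bsub>?G\<^esub> h) y)" using bij_inv_r[OF hB y] by simp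
    have ig1H: "inv\<^bsub>?G\<^esub> \<gamma>1 \<in> H" using Hinv g1H by blast
    show "y \<in> Orb"
      using cases
    proof (elim disjE)
      assume a: "(inv\<^bsub>?G\<^esub> h) y = \<gamma>1 v1"
      have "y = (h \<otimes>\<^bsub>?G\<^esub> \<gamma>1) v1" using yeq a bij_mult_eval[OF hB HB[OF g1H] v1V] by simp
      then show ?thesis unfolding Orb_def using Hmult[OF h g1H] by (rule image_eqI)
    next
      assume a: "(inv\<^bsub>?G\<^esub> h) y = (inv\<^bsub>?G\<^esub> \<gamma>1) v1"
      have "y = (h \<otimes>\<^bsub>?G\<^esub> inv\<^bsub>?G\<^esub> \<gamma>1) v1" using yeq a bij_mult_eval[OF hB HB[OF ig1H] v1V] by simp
      then show ?thesis unfolding Orb_def using Hmult[OF h ig1H] by (rule image_eqI)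
    next
      assume a: "(inv\<^bsub>?G\<^esub> h) y = \<delta>1 v1"
      have "y = (h \<otimes>\<^bsub>?G\<^esub> \<delta>1) v1" using yeq a bij_mult_eval[OF hB HB[OF d1H] v1V] by simp
      then show ?thesis unfolding Orb_def using Hmult[OF h d1H] by (rule image_eqI)
    qed
  qed
  have Oc: "\<And>y u. y \<in> Orb \<Longrightarrow> u \<in> V \<Longrightarrow> E u y \<Longrightarrow> u \<in> Orb" using closed Orb_def by blast
  have OeqV: "Orb = V"
  proof (rule ccontr)
    assume "Orb \<noteq> V"
    then obtain x where x: "x \<in> V" "x \<notin> Orb" using OV by blast
    define f where "f = (\<lambda>y. if y \<in> Orb then z y else 0)"
    have "f \<in> eigenspace V E 1"
      unfolding eigenspace_def
    proof (intro CollectI conjI allI impI ballI)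
      fix y assume "y \<notin> V" then show "f y = 0" using OV f_def by auto
    next
      fix y assume y: "y \<in> V"
      show "(\<Sum>u\<in>nbrs V E y. f u) = 1 * f y"
      proof (cases "y \<in> Orb")
        case True
        have "(\<Sum>u\<in>nbrs V E y. f u) = (\<Sum>u\<in>nbrs V E y. z u)"
        proof (rule sum.cong)
          fix u assume "u \<in> nbrs V E y"
          then have u: "u \<in> V" "E y u" by (auto simp: nbrs_def)
          have "E u y" using u(2) by (rule Esym)
          then have "u \<in> Orb" using Oc[OF True u(1)] by blast
          then show "f u = z u" by (simp add: f_def)
        qed simp
        also have "\<dots> = z y" using z_eig y by (simp add: eigenspace_def)
        finally show ?thesis using True f_def by simp
      next
        case False
        have "(\<Sum>u\<in>nbrs V E y. f u) = (\<Sum>u\<in>nbrs V E y. 0)"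
        proof (rule sum.cong)
          fix u assume "u \<in> nbrs V E y"
          then have u: "u \<in> V" "E y u" by (auto simp: nbrs_def)
          have "u \<notin> Orb" using Oc[OF _ y u(2)] False by blast
          then show "f u = 0" by (simp add: f_def)
        qed simp
        then show ?thesis using False f_def by simp
      qed
    qed
    from simple_ratio[OF simple z_eig zv1 this, of x]
    have "f x = f v1 * z x" .
    then have "z x = 0" using x v1O zv1 f_def by simp
    then show False using z_pm x by force
  qed
  define S where "S = {s \<in> H. E v1 (s v1)}"
  have grp: "group (?G\<lparr>carrier := H\<rparr>)" using subgroup.subgroup_is_group[OF Hsub group_BijGroup] .
  have invc: "\<And>s. s \<in> H \<Longrightarrow> inv\<^bsub>?G\<lparr>carrier := H\<rparr>\<^esub> s = inv\<^bsub>?G\<^esub> s"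
    using G.m_inv_consistent[OF Hsub] by blast
  have f1: "S \<subseteq> carrier (?G\<lparr>carrier := H\<rparr>)" by (auto simp: S_def)
  have f2: "\<one>\<^bsub>?G\<lparr>carrier := H\<rparr>\<^esub> \<notin> S" using Eirr bij_one_eval[OF v1V] by (simp add: S_def)
  have f3: "\<forall>s\<in>S. inv\<^bsub>?G\<lparr>carrier := H\<rparr>\<^esub> s \<in> S"
  proof
    fix s assume s: "s \<in> S"
    then have sH: "s \<in> H" and es: "E v1 (s v1)" by (auto simp: S_def)
    have sB: "s \<in> Bij V" and isB: "inv\<^bsub>?G\<^esub> s \<in> Bij V" using HB sH Hinv by auto
    have isv: "(inv\<^bsub>?G\<^esub> s) v1 \<in> V" by (rule bij_in_V[OF isB v1V])
    have "E (s v1) v1" using es by (rule Esym)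
    then have "E (s v1) (s ((inv\<^bsub>?G\<^esub> s) v1))" using bij_inv_r[OF sB v1V] by simp
    moreover have sG: "s \<in> \<Gamma>" using HG sH by blast
    ultimately have "E v1 ((inv\<^bsub>?G\<^esub> s) v1)" using \<Gamma>e[OF sG v1V isv] by simp
    then show "inv\<^bsub>?G\<lparr>carrier := H\<rparr>\<^esub> s \<in> S" using invc[OF sH] Hinv[OF sH] by (simp add: S_def)
  qed
  have carrH: "carrier (?G\<lparr>carrier := H\<rparr>) = H" by simp
  have f4: "bij_betw (\<lambda>h. h v1) (carrier (?G\<lparr>carrier := H\<rparr>)) V"
    unfolding bij_betw_def carrH
  proof
    show "(\<lambda>h. h v1) ` H = V" using OeqV unfolding Orb_def .
    show "inj_on (\<lambda>h. h v1) H"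
    proof (rule inj_onI)
      fix g h assume gH: "g \<in> H" and hH: "h \<in> H" and eq: "g v1 = h v1"
      have gB: "g \<in> Bij V" by (rule HB[OF gH])
      have hB: "h \<in> Bij V" by (rule HB[OF hH])
      have igB: "inv\<^bsub>?G\<^esub> g \<in> Bij V" by (rule HB[OF Hinv[OF gH]])
      have ev1: "(inv\<^bsub>?G\<^esub> g \<otimes>\<^bsub>?G\<^esub> h) v1 = (inv\<^bsub>?G\<^esub> g) (h v1)" by (rule bij_mult_eval[OF igB hB v1V])
      have ev2: "(inv\<^bsub>?G\<^esub> g) (h v1) = v1" using eq bij_inv_l[OF gB v1V] by simp
      have mem: "inv\<^bsub>?G\<^esub> g \<otimes>\<^bsub>?G\<^esub> h \<in> \<Gamma>" using HG Hmult[OF Hinv[OF gH] hH] by blast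
      have one: "inv\<^bsub>?G\<^esub> g \<otimes>\<^bsub>?G\<^esub> h = \<one>\<^bsub>?G\<^esub>" by (rule stab[OF mem]) (simp only: ev1 ev2)
      have gC: "g \<in> carrier ?G" and hC: "h \<in> carrier ?G" using gB hB carr by auto
      have "h = g \<otimes>\<^bsub>?G\<^esub> \<one>\<^bsub>?G\<^esub>"
        using G.inv_solve_left'[OF G.one_closed gC hC] one by simp
      then show "g = h" using gC by simp
    qed
  qed
  have f5: "\<forall>g\<in>carrier (?G\<lparr>carrier := H\<rparr>). \<forall>h\<in>carrier (?G\<lparr>carrier := H\<rparr>).
      E (g v1) (h v1) \<longleftrightarrow> inv\<^bsub>?G\<lparr>carrier := H\<rparr>\<^esub> g \<otimes>\<^bsub>?G\<lparr>carrier := H\<rparr>\<^esub> h \<in> S"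
    unfolding carrH
  proof (intro ballI)
    fix g h assume gH: "g \<in> H" and hH: "h \<in> H"
    have gB: "g \<in> Bij V" by (rule HB[OF gH])
    have hB: "h \<in> Bij V" by (rule HB[OF hH])
    have igB: "inv\<^bsub>?G\<^esub> g \<in> Bij V" by (rule HB[OF Hinv[OF gH]])
    have gv: "g v1 \<in> V" by (rule bij_in_V[OF gB v1V])
    have hv: "h v1 \<in> V" by (rule bij_in_V[OF hB v1V])
    have igG: "inv\<^bsub>?G\<^esub> g \<in> \<Gamma>" using HG Hinv[OF gH] by blast
    have "E (g v1) (h v1) \<longleftrightarrow> E ((inv\<^bsub>?G\<^esub> g) (g v1)) ((inv\<^bsub>?G\<^esub> g) (h v1))"
      by (rule \<Gamma>e[OF igG gv hv])
    also have "\<dots> \<longleftrightarrow> E v1 ((inv\<^bsub>?G\<^esub> g \<otimes>\<^bsub>?G\<^esub> h) v1)"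
      by (simp only: bij_inv_l[OF gB v1V] bij_mult_eval[OF igB hB v1V])
    also have "\<dots> \<longleftrightarrow> inv\<^bsub>?G\<^esub> g \<otimes>\<^bsub>?G\<^esub> h \<in> S"
      using Hmult[OF Hinv[OF gH] hH] by (simp add: S_def)
    also have "\<dots> \<longleftrightarrow> inv\<^bsub>?G\<lparr>carrier := H\<rparr>\<^esub> g \<otimes>\<^bsub>?G\<lparr>carrier := H\<rparr>\<^esub> h \<in> S"
      using invc[OF gH] by simp
    finally show "E (g v1) (h v1) \<longleftrightarrow> inv\<^bsub>?G\<lparr>carrier := H\<rparr>\<^esub> g \<otimes>\<^bsub>?G\<lparr>carrier := H\<rparr>\<^esub> h \<in> S" .
  qed
  have cay: "is_cayley_graph_of V E (?G\<lparr>carrier := H\<rparr>)"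
    unfolding is_cayley_graph_of_def
    apply (rule conjI[OF grp])
    apply (rule exI[of _ S])
    apply (rule exI[of _ "\<lambda>h. h v1"])
    using f1 f2 f3 f4 f5 by (intro conjI)
  show ?thesis using reg dd dn cay unfolding H_def by (intro conjI)
qed


end
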